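(* Let $G$ be a non-cyclic finite group of order $n$. Then $$\psi(G)\leq \frac{7}{11}\,\psi(C_n).$$
   Context: For a finite group $G$, $\psi(G)=\sum_{g\in G} o(g)$ denotes the sum of the orders of all elements of $G$. $C_n$ denotes the cyclic group of order $n$. *)

theory Defs
  imports "HOL-Algebra.Algebra"
begin

definition psi :: "('a, 'b) monoid_scheme \<Rightarrow> nat" where
  "psi G = (\<Sum>g\<in>carrier G. group.ord G g)"

end

theory Submission
  imports Defs "HOL-Number_Theory.Number_Theory"
begin

definition F :: "nat \<Rightarrow> nat" where
  "F n = (\<Sum>i<n. n div gcd n i)"

lemma F_0 [simp]: "F 0 = 0" by (simp add: F_def)
lemma F_1 [simp]: "F 1 = 1" by (simp add: F_def)
lemma F_Suc0 [simp]: "F (Suc 0) = 1" by (simp add: F_def)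

lemma F_pos: "n > 0 \<Longrightarrow> F n > 0"
proof -
  assume n: "n > 0"
  have "0 < n div gcd n 0" using n by simp
  also have "\<dots> \<le> F n" unfolding F_def
    by (rule member_le_sum) (use n in auto)
  finally show ?thesis .
qed

lemma gcd_coprime_mult:
  fixes a b i :: nat
  assumes "coprime a b"
  shows "gcd (a*b) i = gcd a i * gcd b i"
proof (rule dvd_antisym)
  have c: "coprime (gcd a i) (gcd b i)"
    using assms by (rule coprime_imp_coprime) (meson dvd_trans gcd_dvd1)+
  show "gcd a i * gcd b i dvd gcd (a*b) i"
    using c by (simp add: divides_mult mult_dvd_mono)
  show "gcd (a*b) i dvd gcd a i * gcd b i"
  proof -
    let ?g = "gcd (a*b) i"
    have "?g dvd gcd (a*b) (i*b)" by (simp add: dvd_mult2)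
    moreover have "gcd (a*b) (i*b) = gcd a i * b" by (simp add: gcd_mult_right gcd.commute)
    ultimately have 1: "?g dvd gcd a i * b" by simp
    have "?g dvd gcd (a*i) (i*i)" by (simp add: dvd_mult2)
    moreover have "gcd (a*i) (i*i) = gcd a i * i" by (simp add: gcd_mult_right gcd.commute)
    ultimately have 2: "?g dvd gcd a i * i" by simp
    have "?g dvd gcd (gcd a i * b) (gcd a i * i)" using 1 2 by simp
    also have "\<dots> = gcd a i * gcd b i" by (simp add: gcd_mult_left)
    finally show ?thesis .
  qed
qed

lemma bij_mod_pair:
  fixes a b :: nat
  assumes "coprime a b" "a > 0" "b > 0"
  shows "bij_betw (\<lambda>i. (i mod a, i mod b)) {..<a*b} ({..<a} \<times> {..<b})"
proof -
  let ?h = "\<lambda>i::nat. (i mod a, i mod b)"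
  have inj: "inj_on ?h {..<a*b}"
  proof (rule inj_onI)
    fix x y assume xy: "x \<in> {..<a*b}" "y \<in> {..<a*b}" "?h x = ?h y"
    then have "[x = y] (mod a)" "[x = y] (mod b)" by (auto simp: cong_def)
    then have "[x = y] (mod a*b)" using assms(1) by (rule coprime_cong_mult_nat)
    then show "x = y" using xy by (auto simp: cong_def)
  qed
  have sub: "?h ` {..<a*b} \<subseteq> {..<a} \<times> {..<b}" using assms by auto
  have "card (?h ` {..<a*b}) = card ({..<a} \<times> {..<b})"
    using card_image[OF inj] by (simp add: card_cartesian_product)
  then have "?h ` {..<a*b} = {..<a} \<times> {..<b}"
    using sub by (intro card_subset_eq) auto
  then show ?thesis using inj by (simp add: bij_betw_def)
qed

lemma F_mult:
  assumes "coprime a b"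
  shows "F (a*b) = F a * F b"
proof (cases "a = 0 \<or> b = 0")
  case True
  then show ?thesis using assms by auto
next
  case False
  then have a: "a > 0" and b: "b > 0" by auto
  let ?g = "\<lambda>(x,y). (a div gcd a x) * (b div gcd b y)"
  have trm: "(a*b) div gcd (a*b) i = ?g (i mod a, i mod b)" for i
  proof -
    have "gcd (a*b) i = gcd a i * gcd b i" by (rule gcd_coprime_mult[OF assms])
    moreover have "gcd a i = gcd a (i mod a)" "gcd b i = gcd b (i mod b)"
      by (metis gcd.commute gcd_red_nat)+
    ultimately show ?thesis
      by (simp add: div_mult_div_if_dvd)
  qed
  have "F (a*b) = (\<Sum>i<a*b. ?g (i mod a, i mod b))"
    unfolding F_def using trm by simp
  also have "\<dots> = sum ?g ({..<a} \<times> {..<b})"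
    by (rule sum.reindex_bij_betw[OF bij_mod_pair[OF assms a b]])
  also have "\<dots> = (\<Sum>x<a. \<Sum>y<b. (a div gcd a x) * (b div gcd b y))"
    by (simp add: sum.cartesian_product)
  also have "\<dots> = F a * F b"
    by (simp add: F_def sum_product)
  finally show ?thesis .
qed

lemma F_pp_step:
  assumes p: "Factorial_Ring.prime (p::nat)"
  shows "F (p^Suc e) = F (p^e) + (p^Suc e - p^e) * p^Suc e"
proof -
  let ?N = "p^Suc e"
  have p0: "p > 0" using p prime_gt_0_nat by blast
  define A where "A = {i. i < ?N \<and> p dvd i}"
  define B where "B = {i. i < ?N \<and> \<not> p dvd i}"
  have AB: "{..<?N} = A \<union> B" "A \<inter> B = {}" by (auto simp: A_def B_def)
  have fA: "finite A" and fB: "finite B" by (auto simp: A_def B_def)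
  have Aim: "A = (\<lambda>j. p*j) ` {..<p^e}"
  proof
    show "A \<subseteq> (\<lambda>j. p*j) ` {..<p^e}"
    proof
      fix i assume "i \<in> A"
      then obtain j where j: "i = p*j" "p*j < p * p^e" by (auto simp: A_def)
      then have "j < p^e" using p0 by simp
      then show "i \<in> (\<lambda>j. p*j) ` {..<p^e}" using j by auto
    qed
    show "(\<lambda>j. p*j) ` {..<p^e} \<subseteq> A" using p0 by (auto simp: A_def)
  qed
  have injA: "inj_on (\<lambda>j. p*j) {..<p^e}" using p0 by (auto simp: inj_on_def)
  have cardA: "card A = p^e" using Aim card_image[OF injA] by simp
  have cardB: "card B = ?N - p^e"
  proof -
    have "card {..<?N} = card A + card B" using AB fA fB card_Un_disjoint by metis
    then show ?thesis using cardA by simp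
  qed
  have sumA: "(\<Sum>i\<in>A. ?N div gcd ?N i) = F (p^e)"
  proof -
    have "(\<Sum>i\<in>A. ?N div gcd ?N i) = (\<Sum>j<p^e. ?N div gcd ?N (p*j))"
      unfolding Aim by (rule sum.reindex_cong[OF injA]) auto
    also have "\<dots> = (\<Sum>j<p^e. p^e div gcd (p^e) j)"
    proof (rule sum.cong)
      fix j
      have "gcd ?N (p*j) = p * gcd (p^e) j" by (simp add: gcd_mult_distrib_nat)
      then show "?N div gcd ?N (p*j) = p^e div gcd (p^e) j" using p0 by simp
    qed simp
    finally show ?thesis by (simp add: F_def)
  qed
  have sumB: "(\<Sum>i\<in>B. ?N div gcd ?N i) = card B * ?N"
  proof -
    have "(\<Sum>i\<in>B. ?N div gcd ?N i) = (\<Sum>i\<in>B. ?N)"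
    proof (rule sum.cong)
      fix i assume "i \<in> B"
      then have "\<not> p dvd i" by (simp add: B_def)
      then have "coprime p i" using p by (simp add: prime_imp_coprime)
      then have "coprime ?N i" by simp
      then show "?N div gcd ?N i = ?N" by simp
    qed simp
    then show ?thesis by simp
  qed
  have "F ?N = (\<Sum>i\<in>A. ?N div gcd ?N i) + (\<Sum>i\<in>B. ?N div gcd ?N i)"
    unfolding F_def AB(1) using fA fB AB(2) by (rule sum.union_disjoint)
  then show ?thesis using sumA sumB cardB by simp
qed

lemma pow_aux1: "(p::nat)^e * p^Suc e = p^(2*e+1)"
proof -
  have "2*e+1 = e + Suc e" by simp
  then show ?thesis by (simp only: power_add)
qed

lemma pow_aux2: "(p::nat)*p*p^(2*e+1) = p^(2*Suc e+1)"
proof -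
  have "2*Suc e+1 = Suc (Suc (2*e+1))" by simp
  then show ?thesis by (simp only: power_Suc mult.assoc)
qed

lemma u1: "(p::nat) \<ge> 1 \<Longrightarrow> (p+1) * (p - 1) = p*p - 1"
  by (simp add: algebra_simps)
lemma u2: "(p::nat) \<ge> 1 \<Longrightarrow> W + 1 + (p*p - 1) * W = p*p*W + 1"
  by (simp add: algebra_simps)
lemma u3: "(p::nat)^Suc e - p^e = (p - 1) * p^e"
    by (simp add: diff_mult_distrib)

lemma F_pp:
  assumes p: "Factorial_Ring.prime (p::nat)"
  shows "(p+1) * F (p^e) = p^(2*e+1) + 1"
proof (induction e)
  case 0
  then show ?case by simp
next
  case (Suc e)
  have p1: "p \<ge> 1" using p prime_ge_1_nat by blast
  define W where "W = p^(2*e+1)"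
  have s: "F (p^Suc e) = F (p^e) + (p - 1) * W"
    unfolding F_pp_step[OF p, of e] u3 mult.assoc pow_aux1 W_def ..
  have "(p+1) * F (p^Suc e) = (p+1) * F (p^e) + ((p+1) * (p - 1)) * W"
    unfolding s by (simp add: algebra_simps)
  also have "(p+1) * (p - 1) = p*p - 1"
    using p1 by (rule u1)
  also have "(p+1) * F (p^e) = W + 1"
    using Suc.IH unfolding W_def .
  also have "W + 1 + (p*p - 1) * W = p*p*W + 1"
    using p1 by (rule u2)
  also have "p*p*W = p^(2*Suc e+1)"
    unfolding W_def by (rule pow_aux2)
  finally show ?case .
qed


lemma prime_power_split:
  assumes p: "Factorial_Ring.prime (p::nat)" and n: "n > 0"
  shows "\<exists>e r. n = p^e * r \<and> \<not> p dvd r"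
  using n
proof (induction n rule: less_induct)
  case (less n)
  show ?case
  proof (cases "p dvd n")
    case True
    then obtain m where m: "n = p * m" by blast
    have p1: "p > 1" using p prime_gt_1_nat by blast
    then have "m < n" "m > 0" using m less.prems by auto
    then obtain e r where "m = p^e * r" "\<not> p dvd r" using less.IH by blast
    then show ?thesis using m by (intro exI[of _ "Suc e"] exI[of _ r]) auto
  next
    case False
    then show ?thesis by (intro exI[of _ 0] exI[of _ n]) auto
  qed
qed

lemma F_pp_grow:
  assumes p: "Factorial_Ring.prime (p::nat)"
  shows "(p*p - p + 1) * F (p^e) \<le> F (p^Suc e)"
proof -
  have p1: "p \<ge> 2" using p prime_ge_2_nat by blast
  define Y where "Y = p^(2*e+1)"
  have Yp: "Y \<ge> p" unfolding Y_def using p1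
    by (metis add_gr_0 less_one not_less power_increasing power_one_right zero_less_numeral le_add2 one_le_numeral order.trans)
  have e1: "(p+1) * F (p^e) = Y + 1" unfolding Y_def by (rule F_pp[OF p])
  have e2: "(p+1) * F (p^Suc e) = p*p*Y + 1" unfolding Y_def pow_aux2 by (rule F_pp[OF p])
  have "int ((p*p - p + 1) * (Y + 1)) \<le> int (p*p*Y + 1)"
  proof -
    have i: "int (p*p - p + 1) = int p * int p - int p + 1" using p1 by (simp add: of_nat_diff)
    have "(int p * int p - int p + 1) * (int Y + 1) \<le> int p * int p * int Y + 1"
    proof -
      have "(int p - 1) * (int Y - int p) \<ge> 0" using p1 Yp by simp
      then show ?thesis by (simp add: algebra_simps)
    qed
    moreover have "int ((p*p - p + 1) * (Y + 1)) = (int p * int p - int p + 1) * (int Y + 1)"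
      using i by (simp only: of_nat_mult of_nat_add of_nat_1)
    moreover have "int (p*p*Y + 1) = int p * int p * int Y + 1" by simp
    ultimately show ?thesis by linarith
  qed
  then have "(p*p - p + 1) * (Y + 1) \<le> p*p*Y + 1" by linarith
  then have "(p+1) * ((p*p - p + 1) * F (p^e)) \<le> (p+1) * F (p^Suc e)"
    using e1 e2 by (metis mult.assoc mult.commute)
  then show ?thesis by (rule mult_left_le_imp_le) simp
qed

lemma F_step:
  assumes p: "Factorial_Ring.prime (p::nat)" and m: "m > 0"
  shows "(p*p - p + 1) * F m \<le> F (p*m)"
proof -
  obtain e r where er: "m = p^e * r" "\<not> p dvd r" using prime_power_split[OF p m] by blast
  have c1: "coprime (p^e) r" "coprime (p^Suc e) r"
    using er(2) p by (simp_all add: prime_imp_coprime)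
  have A1: "F m = F (p^e) * F r" using er(1) F_mult[OF c1(1)] by simp
  have pm: "p * m = p^Suc e * r" using er(1) by (simp add: mult.assoc)
  have A2: "F (p*m) = F (p^Suc e) * F r" unfolding pm by (rule F_mult[OF c1(2)])
  have "(p*p - p + 1) * F (p^e) * F r \<le> F (p^Suc e) * F r"
    by (rule mult_right_mono[OF F_pp_grow[OF p]]) simp
  then show ?thesis unfolding A1 A2 by (simp only: mult.assoc)
qed

lemma F_mono:
  assumes "m dvd n" "n > 0"
  shows "F m \<le> F n"
proof -
  obtain c where c: "n = m * c" using assms(1) by blast
  then have c0: "c > 0" "m > 0" using assms(2) by auto
  have inj: "inj_on (\<lambda>i. c*i) {..<m}" using c0 by (auto simp: inj_on_def)
  have "F m = (\<Sum>i<m. n div gcd n (c*i))"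
    unfolding F_def
  proof (rule sum.cong)
    fix i
    have "gcd n (c*i) = c * gcd m i" unfolding c by (simp add: gcd_mult_distrib_nat mult.commute)
    then show "m div gcd m i = n div gcd n (c*i)" using c0 c by simp
  qed simp
  also have "\<dots> = (\<Sum>j\<in>(\<lambda>i. c*i) ` {..<m}. n div gcd n j)"
    by (simp add: sum.reindex[OF inj])
  also have "\<dots> \<le> (\<Sum>j<n. n div gcd n j)"
    by (rule sum_mono2) (use c c0 in auto)
  finally show ?thesis by (simp add: F_def)
qed

lemma F_proper:
  assumes k: "k > 0" and d: "d dvd k" "d \<ge> 2"
  shows "3 * F (k div d) \<le> F k"
proof -
  have "d \<noteq> 1" using d(2) by simp
  then obtain p where p: "Factorial_Ring.prime p" "p dvd d" using prime_factor_nat by blast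
  obtain d' where d': "d = p * d'" using p(2) by blast
  obtain j where j: "k = d * j" using d(1) by blast
  have j0: "j > 0" using j k by auto
  have kd: "k div d = j" using j d(2) by simp
  have "k = p * (d' * j)" using j d' by simp
  have d'0: "d' > 0"
  proof (rule ccontr)
    assume "\<not> d' > 0"
    then have "d' = 0" by simp
    then show False using d' d(2) by simp
  qed
  have p2: "p \<ge> 2" using p prime_ge_2_nat by blast
  have "3 \<le> p*p - p + 1"
  proof -
    have "p*p \<ge> 2*p" using p2 by simp
    then show ?thesis using p2 by linarith
  qed
  then have "3 * F (d'*j) \<le> (p*p - p + 1) * F (d'*j)" by (rule mult_right_mono) simp
  also have "\<dots> \<le> F (p*(d'*j))" using F_step[OF p(1)] d'0 j0 by simp
  also have "p*(d'*j) = k" using j d' by simp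
  finally have "3 * F (d'*j) \<le> F k" .
  moreover have "F j \<le> F (d'*j)" using F_mono[of j "d'*j"] d'0 j0 by simp
  ultimately have "3 * F j \<le> F k" by linarith
  then show ?thesis using kd by simp
qed


lemma F_lower:
  assumes "n > 0" "Q \<ge> 1" "\<forall>p. Factorial_Ring.prime p \<longrightarrow> p dvd n \<longrightarrow> p \<le> Q"
  shows "2 * n^2 \<le> (Q+1) * F n"
  using assms
proof (induction n arbitrary: Q rule: less_induct)
  case (less n)
  show ?case
  proof (cases "n = 1")
    case True
    then show ?thesis using less.prems by simp
  next
    case False
    define P where "P = {p. Factorial_Ring.prime p \<and> p dvd n}"
    have finP: "finite P" unfolding P_def
      by (rule finite_subset[of _ "{..n}"]) (use less.prems in \<open>auto dest: dvd_imp_le\<close>)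
    obtain p0 where p0: "Factorial_Ring.prime p0" "p0 dvd n" using prime_factor_nat[OF False] by blast
    have neP: "P \<noteq> {}" using p0 by (auto simp: P_def)
    define p where "p = Max P"
    have pP: "p \<in> P" unfolding p_def using finP neP by (rule Max_in)
    have pprime: "Factorial_Ring.prime p" and pdvd: "p dvd n" using pP by (auto simp: P_def)
    have pmax: "q \<le> p" if "Factorial_Ring.prime q" "q dvd n" for q
      unfolding p_def using finP that by (auto simp: P_def)
    have p2: "p \<ge> 2" using pprime prime_ge_2_nat by blast
    obtain e r where er: "n = p^e * r" "\<not> p dvd r" using prime_power_split[OF pprime less.prems(1)] by blast
    have e0: "e \<noteq> 0"
    proof
      assume "e = 0"
      then show False using er pdvd by simp
    qed
    have r0: "r > 0" using er less.prems(1) by (cases r) auto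
    have "p^1 \<le> p^e" by (rule power_increasing) (use e0 p2 in auto)
    then have "p^e \<ge> 2" using p2 by simp
    then have rn: "r < n" using er r0 by simp
    have rprimes: "\<forall>q. Factorial_Ring.prime q \<longrightarrow> q dvd r \<longrightarrow> q \<le> p - 1"
    proof (intro allI impI)
      fix q assume q: "Factorial_Ring.prime q" "q dvd r"
      then have "q dvd n" using er by simp
      then have "q \<le> p" using pmax q by blast
      moreover have "q \<noteq> p" using q er by auto
      ultimately show "q \<le> p - 1" by simp
    qed
    have IH: "2 * r^2 \<le> (p - 1 + 1) * F r"
      using less.IH[OF rn r0 _ rprimes] p2 by simp
    have IH': "2 * r^2 \<le> p * F r" using IH p2 by simp
    have cop: "coprime (p^e) r" using er(2) pprime by (simp add: prime_imp_coprime)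
    have Fn: "F n = F (p^e) * F r" using er(1) F_mult[OF cop] by simp
    have pp: "(p+1) * F (p^e) = p^(2*e+1) + 1" by (rule F_pp[OF pprime])
    have "2 * n^2 = p^(2*e) * (2 * r^2)" using er(1) by (simp add: power_mult_distrib power_mult algebra_simps)
    also have "\<dots> \<le> p^(2*e) * (p * F r)" using IH' by simp
    also have "\<dots> = p^(2*e+1) * F r" by (simp add: algebra_simps)
    also have "\<dots> \<le> ((p+1) * F (p^e)) * F r" unfolding pp by simp
    also have "\<dots> = (p+1) * F n" unfolding Fn by (simp add: algebra_simps)
    also have "\<dots> \<le> (Q+1) * F n" using less.prems(3) pprime pdvd by simp
    finally show ?thesis .
  qed
qed

lemma ord_iso:
  assumes G: "group G" and H: "group H" and h: "h \<in> iso G H" and x: "x \<in> carrier G"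
  shows "group.ord H (h x) = group.ord G x"
proof -
  interpret G: group G by (rule G)
  interpret H: group H by (rule H)
  have hom: "h \<in> hom G H" and inj: "inj_on h (carrier G)" using h by (auto simp: iso_def bij_betw_def)
  have "(h x [^]\<^bsub>H\<^esub> n = \<one>\<^bsub>H\<^esub>) \<longleftrightarrow> (x [^]\<^bsub>G\<^esub> n = \<one>\<^bsub>G\<^esub>)" for n :: nat
  proof -
    have "h x [^]\<^bsub>H\<^esub> n = h (x [^]\<^bsub>G\<^esub> n)" using hom_nat_pow[OF hom x G H] by simp
    moreover have "h \<one>\<^bsub>G\<^esub> = \<one>\<^bsub>H\<^esub>" using hom G H by (simp add: group_hom.hom_one group_hom_axioms_def group_hom_def)
    moreover have "h (x [^]\<^bsub>G\<^esub> n) = h \<one>\<^bsub>G\<^esub> \<longleftrightarrow> x [^]\<^bsub>G\<^esub> n = \<one>\<^bsub>G\<^esub>"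
      using inj x by (auto dest: inj_onD)
    ultimately show ?thesis by simp
  qed
  then have "\<forall>n. (h x [^]\<^bsub>H\<^esub> n = \<one>\<^bsub>H\<^esub>) \<longleftrightarrow> G.ord x dvd n" using G.pow_eq_id[OF x] by simp
  moreover have "h x \<in> carrier H" using hom x by (auto simp: hom_def)
  ultimately show ?thesis using H.ord_unique by blast
qed

lemma psi_iso:
  assumes G: "group G" and H: "group H" and h: "h \<in> iso G H"
  shows "psi H = psi G"
proof -
  have bij: "bij_betw h (carrier G) (carrier H)" using h by (auto simp: iso_def)
  have "psi H = (\<Sum>x\<in>carrier G. group.ord H (h x))"
    unfolding psi_def by (rule sum.reindex_bij_betw[OF bij, symmetric])
  also have "\<dots> = psi G" unfolding psi_def
    by (rule sum.cong) (auto intro: ord_iso[OF G H h])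
  finally show ?thesis .
qed

lemma transfer_nat:
  assumes K: "group K" and fin: "finite (carrier K)"
  shows "\<exists>H :: nat monoid. group H \<and> finite (carrier H) \<and> order H = order K \<and> psi H = psi K
            \<and> (cyclic_group H \<longleftrightarrow> cyclic_group K)"
proof -
  interpret K: group K by (rule K)
  obtain f where f: "bij_betw f (carrier K) {0..<card (carrier K)}"
    using ex_bij_betw_finite_nat[OF fin] by blast
  define g where "g = inv_into (carrier K) f"
  have inj: "inj_on f (carrier K)" using f by (simp add: bij_betw_def)
  have im: "f ` carrier K = {0..<card (carrier K)}" using f by (simp add: bij_betw_def)
  have gf: "g (f a) = a" if "a \<in> carrier K" for a using inj that by (simp add: g_def)
  have gc: "g b \<in> carrier K" if "b \<in> f ` carrier K" for b using that by (simp add: g_def inv_into_into)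
  have fg: "f (g b) = b" if "b \<in> f ` carrier K" for b using that by (simp add: g_def f_inv_into_f)
  define H :: "nat monoid" where
    "H = \<lparr>carrier = f ` carrier K, monoid.mult = (\<lambda>a b. f (g a \<otimes>\<^bsub>K\<^esub> g b)), one = f \<one>\<^bsub>K\<^esub>\<rparr>"
  have mon: "monoid H"
  proof (rule monoidI)
    fix x y z assume xyz: "x \<in> carrier H" "y \<in> carrier H" "z \<in> carrier H"
    then show "x \<otimes>\<^bsub>H\<^esub> y \<in> carrier H" by (auto simp: H_def intro!: imageI K.m_closed gc)
    show "x \<otimes>\<^bsub>H\<^esub> y \<otimes>\<^bsub>H\<^esub> z = x \<otimes>\<^bsub>H\<^esub> (y \<otimes>\<^bsub>H\<^esub> z)"
      using xyz by (simp add: H_def gf gc K.m_assoc)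
  next
    show "\<one>\<^bsub>H\<^esub> \<in> carrier H" by (simp add: H_def)
  next
    fix x assume "x \<in> carrier H"
    then show "\<one>\<^bsub>H\<^esub> \<otimes>\<^bsub>H\<^esub> x = x" "x \<otimes>\<^bsub>H\<^esub> \<one>\<^bsub>H\<^esub> = x"
      by (simp_all add: H_def gf gc fg)
  qed
  have hiso: "f \<in> iso K H"
    unfolding iso_def hom_def using inj by (auto simp: H_def gf bij_betw_def)
  then have "K \<cong> H" by (rule is_isoI)
  then have grpH: "group H" using K.iso_imp_group mon by blast
  show ?thesis
  proof (intro exI conjI)
    show "group H" by (rule grpH)
    show "finite (carrier H)" using fin by (simp add: H_def)
    show "order H = order K" using inj by (simp add: H_def order_def card_image)
    show "psi H = psi K" by (rule psi_iso[OF K grpH hiso])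
    show "cyclic_group H \<longleftrightarrow> cyclic_group K"
      using isomorphic_group_cyclicity[OF \<open>K \<cong> H\<close> K grpH] by simp
  qed
qed

context group begin

definition cyc :: "'a \<Rightarrow> 'a set" where
  "cyc x = (\<lambda>j. x [^] j) ` {..<ord x}"

lemma cyc_inj:
  assumes fin: "finite (carrier G)" and x: "x \<in> carrier G"
  shows "inj_on (\<lambda>j. x [^] j) {..<ord x}"
proof -
  have "ord x \<ge> 1" by (rule ord_ge_1[OF fin x])
  then have "{..<ord x} = {0..ord x - 1}" by auto
  then show ?thesis using ord_inj[OF x] by simp
qed

lemma card_cyc:
  assumes fin: "finite (carrier G)" and x: "x \<in> carrier G"
  shows "card (cyc x) = ord x"
  unfolding cyc_def using card_image[OF cyc_inj[OF fin x]] by simp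

lemma cyc_subset: "x \<in> carrier G \<Longrightarrow> cyc x \<subseteq> carrier G"
  unfolding cyc_def by auto

lemma pow_mod_ord:
  assumes x: "x \<in> carrier G"
  shows "x [^] (k::nat) = x [^] (k mod ord x)"
proof -
  have "x [^] k = x [^] (ord x * (k div ord x) + k mod ord x)" by (simp only: mult_div_mod_eq)
  also have "\<dots> = (x [^] ord x) [^] (k div ord x) \<otimes> x [^] (k mod ord x)"
    using x by (simp only: nat_pow_pow nat_pow_mult)
  also have "\<dots> = x [^] (k mod ord x)" using x by simp
  finally show ?thesis .
qed

lemma pow_in_cyc:
  assumes fin: "finite (carrier G)" and x: "x \<in> carrier G"
  shows "x [^] (k::nat) \<in> cyc x"
proof -
  have "ord x \<ge> 1" by (rule ord_ge_1[OF fin x])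
  then have "k mod ord x < ord x" by simp
  then show ?thesis unfolding cyc_def pow_mod_ord[OF x, of k] by blast
qed

lemma cyc_eq_pows:
  assumes fin: "finite (carrier G)" and x: "x \<in> carrier G"
  shows "cyc x = {x [^] k | k::nat. True}"
  using pow_in_cyc[OF fin x] unfolding cyc_def by blast

lemma cyc_subgroup:
  assumes fin: "finite (carrier G)" and x: "x \<in> carrier G"
  shows "subgroup (cyc x) G"
proof -
  have "generate G {x} = cyc x"
    using generate_pow_on_finite_carrier[OF fin x] cyc_eq_pows[OF fin x] by simp
  then show ?thesis using generate_is_subgroup[of "{x}"] x by simp
qed

lemma cyc_sum:
  assumes fin: "finite (carrier G)" and x: "x \<in> carrier G"
  shows "(\<Sum>y\<in>cyc x. ord y) = F (ord x)"
proof -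
  have "(\<Sum>y\<in>cyc x. ord y) = (\<Sum>j\<in>{..<ord x}. ord (x [^] j))"
    unfolding cyc_def by (rule sum.reindex_cong[OF cyc_inj[OF fin x]]) auto
  also have "\<dots> = (\<Sum>j\<in>{..<ord x}. ord x div gcd (ord x) j)"
    by (rule sum.cong) (auto simp: ord_pow_gen[OF x] ord_ge_1[OF fin x] Suc_le_eq)
  finally show ?thesis by (simp add: F_def)
qed

lemma psi_le_max:
  assumes fin: "finite (carrier G)" and M: "\<And>g. g \<in> carrier G \<Longrightarrow> ord g \<le> M"
  shows "psi G \<le> order G * M"
proof -
  have "psi G \<le> (\<Sum>g\<in>carrier G. M)" unfolding psi_def by (rule sum_mono) (rule M)
  then show ?thesis by (simp add: order_def)
qed

lemma psi_crude:
  assumes fin: "finite (carrier G)" and x: "x \<in> carrier G"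
    and M: "\<And>g. g \<in> carrier G \<Longrightarrow> ord g \<le> ord x"
  shows "psi G \<le> F (ord x) + (order G - ord x) * ord x"
proof -
  have sub: "cyc x \<subseteq> carrier G" by (rule cyc_subset[OF x])
  have "psi G = (\<Sum>g\<in>cyc x. ord g) + (\<Sum>g\<in>carrier G - cyc x. ord g)"
    unfolding psi_def using sum.subset_diff[OF sub fin] by (simp add: add.commute)
  also have "(\<Sum>g\<in>carrier G - cyc x. ord g) \<le> (\<Sum>g\<in>carrier G - cyc x. ord x)"
    by (rule sum_mono) (use M in auto)
  also have "\<dots> = (order G - ord x) * ord x"
    using card_Diff_subset[OF finite_subset[OF sub fin] sub] card_cyc[OF fin x]
    by (simp add: order_def)
  finally show ?thesis by (simp add: cyc_sum[OF fin x])
qed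

lemma cyc_full:
  assumes fin: "finite (carrier G)" and x: "x \<in> carrier G" and o: "ord x = order G"
  shows "cyc x = carrier G"
  using card_subset_eq[OF fin cyc_subset[OF x]] card_cyc[OF fin x] o by (simp add: order_def)

lemma cyclic_if_ord:
  assumes fin: "finite (carrier G)" and x: "x \<in> carrier G" and o: "ord x = order G"
  shows "cyclic_group G"
proof -
  have "carrier G = range (\<lambda>n::int. x [^] n)"
  proof
    show "carrier G \<subseteq> range (\<lambda>n::int. x [^] n)"
    proof
      fix g assume "g \<in> carrier G"
      then obtain j::nat where "g = x [^] j" using cyc_full[OF fin x o] unfolding cyc_def by auto
      then have "g = x [^] (int j)" by (simp add: int_pow_int)
      then show "g \<in> range (\<lambda>n::int. x [^] n)" by blast
    qed
    show "range (\<lambda>n::int. x [^] n) \<subseteq> carrier G" using x by auto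
  qed
  then show ?thesis using x cyclic_group by blast
qed

lemma psi_if_ord:
  assumes fin: "finite (carrier G)" and x: "x \<in> carrier G" and o: "ord x = order G"
  shows "psi G = F (order G)"
  unfolding psi_def using cyc_sum[OF fin x] cyc_full[OF fin x o] o by simp

end

lemma psi_integer_mod_group:
  assumes n: "n \<ge> 1"
  shows "psi (integer_mod_group n) = F n"
proof (cases "n = 1")
  case True
  then have "carrier (integer_mod_group n) = {0}" by (auto simp: carrier_integer_mod_group)
  moreover have "group.ord (integer_mod_group n) 0 = 1"
    using group.ord_id[OF group_integer_mod_group, of n] by simp
  ultimately show ?thesis using True by (simp add: psi_def)
next
  case False
  interpret Z: group "integer_mod_group n" by simp
  have fin: "finite (carrier (integer_mod_group n))" using n by (simp add: carrier_integer_mod_group)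
  have one: "(1::int) \<in> carrier (integer_mod_group n)" using False by simp
  have "Z.ord 1 = n"
  proof -
    have "\<forall>k. (1 [^]\<^bsub>integer_mod_group n\<^esub> k = \<one>\<^bsub>integer_mod_group n\<^esub>) \<longleftrightarrow> n dvd k"
    proof
      fix k
      have "1 [^]\<^bsub>integer_mod_group n\<^esub> k = int k mod int n" using one by simp
      then show "(1 [^]\<^bsub>integer_mod_group n\<^esub> k = \<one>\<^bsub>integer_mod_group n\<^esub>) \<longleftrightarrow> n dvd k"
        by (simp add: mod_eq_0_iff_dvd)
    qed
    then show ?thesis using Z.ord_unique[OF one] by blast
  qed
  moreover have "order (integer_mod_group n) = n"
    using n by (simp add: order_def carrier_integer_mod_group)
  ultimately show ?thesis using Z.psi_if_ord[OF fin one] by simp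
qed

context group begin

lemma subgroup_pow_closed:
  assumes "subgroup H G" "h \<in> H"
  shows "h [^] (n::nat) \<in> H"
proof (induction n)
  case 0
  then show ?case using assms(1) by (simp add: subgroup.one_closed)
next
  case (Suc n)
  have "h [^] Suc n = h [^] n \<otimes> h" by simp
  then show ?case using Suc assms by (simp add: subgroup.m_closed)
qed

lemma small_index:
  assumes fin: "finite (carrier G)" and H: "subgroup H G" and g: "g \<in> carrier G"
    and m: "card (rcosets H) = m"
    and cop: "\<And>j. 1 \<le> j \<Longrightarrow> j \<le> m \<Longrightarrow> coprime j (ord g)"
  shows "g \<in> H"
proof -
  let ?f = "\<lambda>i::nat. H #> g [^] i"
  have HG: "H \<subseteq> carrier G" using H by (rule subgroup.subset)
  have img: "?f ` {0..m} \<subseteq> rcosets H" using HG g by (auto intro: rcosetsI)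
  have finR: "finite (rcosets H)"
    using fin by (metis HG finite_Pow_iff rcosets_subset_PowG[OF H] finite_subset)
  have "\<not> inj_on ?f {0..m}"
  proof
    assume "inj_on ?f {0..m}"
    then have "card {0..m} \<le> card (rcosets H)" using card_inj_on_le[OF _ img finR] by blast
    then show False using m by simp
  qed
  then obtain i i' where ii: "i \<in> {0..m}" "i' \<in> {0..m}" "i \<noteq> i'" "?f i = ?f i'"
    by (auto simp: inj_on_def)
  obtain u v where uv: "u < v" "v \<le> m" "H #> g [^] u = H #> g [^] v"
  proof (cases "i < i'")
    case True then show ?thesis using that ii by auto
  next
    case False then show ?thesis using that[of i' i] ii by auto
  qed
  have "g [^] v \<in> H #> g [^] u" using uv(3) g H by (simp add: rcos_self)
  then have "g [^] v \<otimes> inv (g [^] u) \<in> H" using H g by (simp add: subgroup.rcos_module_imp)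
  moreover have "g [^] v = g [^] (v - u) \<otimes> g [^] u" using uv g by (simp add: nat_pow_mult)
  ultimately have jH: "g [^] (v - u) \<in> H" using g by (simp add: m_assoc)
  have "coprime (v - u) (ord g)" using cop uv by simp
  then obtain s where s: "[(v - u) * s = Suc 0] (mod ord g)" using cong_solve_coprime_nat by blast
  have "g [^] ((v - u) * s) = g [^] (Suc 0)"
    using pow_mod_ord[OF g, of "(v-u)*s"] pow_mod_ord[OF g, of "Suc 0"] s by (simp add: cong_def)
  moreover have "g [^] ((v - u) * s) = (g [^] (v - u)) [^] s" using g by (simp add: nat_pow_pow)
  ultimately have e: "(g [^] (v - u)) [^] s = g" using g by simp
  show ?thesis using subgroup_pow_closed[OF H jH, of s] unfolding e .
qed

lemma comm_pow_mult:
  assumes "a \<otimes> b = b \<otimes> a" "a \<in> carrier G" "b \<in> carrier G"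
  shows "(a \<otimes> b) [^] (n::nat) = a [^] n \<otimes> b [^] n"
  using pow_mult_distrib[OF assms] .

lemma ord_comm_coprime:
  assumes fin: "finite (carrier G)" and ab: "a \<otimes> b = b \<otimes> a" "a \<in> carrier G" "b \<in> carrier G"
    and cop: "coprime (ord a) (ord b)"
  shows "ord (a \<otimes> b) = ord a * ord b"
proof (rule dvd_antisym)
  show "ord (a \<otimes> b) dvd ord a * ord b" using ord_mul_divides[OF ab] .
  let ?n = "ord (a \<otimes> b)"
  have "(a \<otimes> b) [^] ?n = \<one>" using ab by simp
  then have e: "a [^] ?n \<otimes> b [^] ?n = \<one>" using comm_pow_mult[OF ab] by simp
  have ie: "inv (b [^] ?n) = a [^] ?n" by (rule inv_equality[OF e]) (use ab in auto)
  define w where "w = a [^] ?n"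
  have w: "w \<in> carrier G" using ab by (simp add: w_def)
  have "w [^] ord a = a [^] (ord a * ?n)"
    unfolding w_def using ab by (simp add: nat_pow_pow mult.commute)
  also have "\<dots> = \<one>" using ab pow_eq_id by simp
  finally have "w [^] ord a = \<one>" .
  then have d1: "ord w dvd ord a" using pow_eq_id[OF w, of "ord a"] by simp
  have "w [^] ord b = inv ((b [^] ?n) [^] ord b)"
    unfolding w_def ie[symmetric] using ab by (simp only: nat_pow_inv nat_pow_closed)
  also have "(b [^] ?n) [^] ord b = b [^] (ord b * ?n)" using ab by (simp add: nat_pow_pow mult.commute)
  also have "\<dots> = \<one>" using ab pow_eq_id by simp
  finally have "w [^] ord b = \<one>" by simp
  then have d2: "ord w dvd ord b" using pow_eq_id[OF w, of "ord b"] by simp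
  have "ord w = 1" by (rule coprime_common_divisor_nat[OF cop d1 d2])
  then have "w = \<one>" using w ord_eq_1 by simp
  then have "ord a dvd ?n" using pow_eq_id[OF ab(2), of ?n] unfolding w_def by simp
  moreover have "b [^] ?n = \<one>"
  proof -
    have "\<one> \<otimes> b [^] ?n = \<one>" using e \<open>w = \<one>\<close> by (simp only: w_def)
    then show ?thesis using ab by simp
  qed
  then have "ord b dvd ?n" using pow_eq_id[OF ab(3), of ?n] by simp
  ultimately show "ord a * ord b dvd ?n" using cop by (simp add: divides_mult)
qed

lemma inv_cancel_left:
  assumes "x \<in> carrier G" "y \<in> carrier G"
  shows "inv x \<otimes> (x \<otimes> y) = y"
  using assms by (simp add: m_assoc[symmetric])

lemma conj_pow:
  assumes "h \<in> carrier G" "g \<in> carrier G"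
  shows "(h \<otimes> g \<otimes> inv h) [^] (n::nat) = h \<otimes> g [^] n \<otimes> inv h"
proof (induction n)
  case 0
  then show ?case using assms by simp
next
  case (Suc n)
  have "(h \<otimes> g \<otimes> inv h) [^] Suc n = (h \<otimes> g [^] n \<otimes> inv h) \<otimes> (h \<otimes> g \<otimes> inv h)"
    using Suc by simp
  also have "\<dots> = h \<otimes> (g [^] n \<otimes> g) \<otimes> inv h" using assms by (simp add: m_assoc inv_cancel_left)
  finally show ?case by simp
qed

end

locale psetup = group +
  fixes P z q a Q
  assumes fin: "finite (carrier G)"
    and zc: "z \<in> carrier G" and ordz: "ord z = Q" and Qdef: "Q = q^a"
    and Pdef: "P = cyc z"
    and qprime: "Factorial_Ring.prime q" and a1: "a \<ge> 1"
    and normP: "P \<lhd> G"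
    and copQ: "coprime Q (order G div Q)"
    and Qdvd: "Q dvd order G"
begin

lemma Q_pos: "Q > 0" using ord_ge_1[OF fin zc] ordz by simp

lemma subP: "subgroup P G" using normP by (rule normal_imp_subgroup)

lemma P_sub: "P \<subseteq> carrier G" unfolding Pdef by (rule cyc_subset[OF zc])

lemma card_P: "card P = Q" unfolding Pdef using card_cyc[OF fin zc] ordz by simp

lemma fin_P: "finite P" using P_sub fin finite_subset by blast

lemma P_elem: "c \<in> P \<Longrightarrow> \<exists>i<Q. c = z [^] i"
  unfolding Pdef cyc_def ordz by auto

lemma zQ: "z [^] Q = \<one>" using pow_ord_eq_1[OF zc] unfolding ordz .

lemma P_pow_Q: "c \<in> P \<Longrightarrow> c [^] Q = \<one>"
proof -
  assume "c \<in> P"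
  then obtain i where "i < Q" "c = z [^] i" using P_elem by blast
  then have "c [^] Q = (z [^] Q) [^] i" using zc by (simp add: nat_pow_pow mult.commute)
  then show ?thesis using zQ by simp
qed

lemma P_comm: "c \<in> P \<Longrightarrow> c' \<in> P \<Longrightarrow> c \<otimes> c' = c' \<otimes> c"
proof -
  assume cP: "c \<in> P" and cP': "c' \<in> P"
  obtain i where "i < Q" "c = z [^] i" using P_elem[OF cP] by blast
  moreover obtain j where "j < Q" "c' = z [^] j" using P_elem[OF cP'] by blast
  ultimately show ?thesis using zc by (simp add: nat_pow_mult add.commute)
qed

lemma ord_P_dvd: "c \<in> P \<Longrightarrow> ord c dvd Q"
  using P_pow_Q P_sub pow_eq_id by blast

lemma conj_in_cyc:
  assumes h: "h \<in> carrier G" and c: "c \<in> P"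
  shows "h \<otimes> c \<otimes> inv h \<in> cyc c"
proof -
  have cc: "c \<in> carrier G" using c P_sub by auto
  obtain i where i: "i < Q" "c = z [^] i" using P_elem[OF c] by blast
  define y where "y = h \<otimes> c \<otimes> inv h"
  have yP: "y \<in> P" unfolding y_def using normal.inv_op_closed2[OF normP h c] .
  obtain j where "j < Q" and j: "y = z [^] j" using P_elem[OF yP] by blast
  have "y [^] ord c = h \<otimes> c [^] ord c \<otimes> inv h" unfolding y_def by (rule conj_pow[OF h cc])
  also have "\<dots> = \<one>" using h cc by simp
  finally have y1: "y [^] ord c = \<one>" .
  show ?thesis
  proof (cases "i = 0")
    case True
    then have "c = \<one>" using i by simp
    then have "ord c = 1" by simp
    then have "y = \<one>" using y1 yP P_sub by auto
    moreover have "c [^] (0::nat) \<in> cyc c" by (rule pow_in_cyc[OF fin cc])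
    ultimately show ?thesis unfolding y_def by simp
  next
    case False
    define g where "g = gcd Q i"
    have oc: "ord c = Q div g" using i False ord_pow_gen[OF zc, of i] ordz by (simp add: g_def)
    have g0: "g > 0" using Q_pos by (simp add: g_def)
    have gQ: "g dvd Q" by (simp add: g_def)
    have "z [^] (j * ord c) = \<one>" using y1 j zc by (simp add: nat_pow_pow)
    then have "Q dvd j * (Q div g)" using pow_eq_id[OF zc] ordz oc by simp
    moreover have "Q = g * (Q div g)" using gQ by simp
    ultimately have "g * (Q div g) dvd j * (Q div g)" by simp
    moreover have "Q div g \<noteq> 0" using gQ Q_pos by (metis dvd_div_eq_0_iff less_not_refl2)
    ultimately have gj: "g dvd j" using dvd_times_right_cancel_iff by blast
    then obtain j' where j': "j = g * j'" by blast
    obtain x y' where xy: "i * x = Q * y' + gcd i Q" using bezout_nat[OF False] by blast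
    have "i * (x * j') = (i * x) * j'" by (simp only: mult.assoc)
    also have "\<dots> = (Q * y' + gcd i Q) * j'" by (simp only: xy)
    also have "\<dots> = Q * (y' * j') + g * j'" by (simp add: g_def gcd.commute algebra_simps)
    finally have e: "i * (x * j') = Q * (y' * j') + j" using j' by simp
    have "c [^] (x * j') = z [^] (i * (x * j'))" using i zc by (simp add: nat_pow_pow)
    also have "\<dots> = (z [^] Q) [^] (y' * j') \<otimes> z [^] j"
      unfolding e using zc by (simp add: nat_pow_mult nat_pow_pow)
    also have "\<dots> = y" using zc zQ j by simp
    finally have "y = c [^] (x * j')" by simp
    then show ?thesis using pow_in_cyc[OF fin cc] unfolding y_def by simp
  qed
qed

lemma pow_prod_in_cyc:
  assumes c: "c \<in> P" and r: "r \<in> carrier G"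
  shows "\<exists>w\<in>cyc c. (c \<otimes> r) [^] (i::nat) = w \<otimes> r [^] i"
proof (induction i)
  case 0
  have cc: "c \<in> carrier G" using c P_sub by auto
  have "c [^] (0::nat) \<in> cyc c" by (rule pow_in_cyc[OF fin cc])
  then have "\<one> \<in> cyc c" by simp
  moreover have "(c \<otimes> r) [^] (0::nat) = \<one> \<otimes> r [^] (0::nat)" by simp
  ultimately show ?case by blast
next
  case (Suc i)
  have cc: "c \<in> carrier G" using c P_sub by auto
  obtain w where w: "w \<in> cyc c" "(c \<otimes> r) [^] i = w \<otimes> r [^] i" using Suc by blast
  have wc: "w \<in> carrier G" using w(1) cyc_subset[OF cc] by auto
  define w' where "w' = r [^] i \<otimes> c \<otimes> inv (r [^] i)"
  have w': "w' \<in> cyc c" unfolding w'_def by (rule conj_in_cyc[OF _ c]) (use r in simp)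
  have w'c: "w' \<in> carrier G" using w' cyc_subset[OF cc] by auto
  have "(c \<otimes> r) [^] Suc i = w \<otimes> r [^] i \<otimes> (c \<otimes> r)" using w(2) by simp
  also have "\<dots> = (w \<otimes> w') \<otimes> r [^] Suc i"
    unfolding w'_def using wc cc r by (simp add: m_assoc inv_cancel_left)
  finally have "(c \<otimes> r) [^] Suc i = (w \<otimes> w') \<otimes> r [^] Suc i" .
  moreover have "w \<otimes> w' \<in> cyc c" using subgroup.m_closed[OF cyc_subgroup[OF fin cc] w(1) w'] .
  ultimately show ?case by blast
qed

abbreviation K where "K \<equiv> G Mod P"

lemma grpK: "group K" using normal.factorgroup_is_group[OF normP] .

lemma carrier_K: "carrier K = rcosets P" by (simp add: FactGroup_def)

lemma finK: "finite (carrier K)"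
  unfolding carrier_K using fin by (metis P_sub finite_Pow_iff rcosets_subset_PowG[OF subP] finite_subset)

lemma order_K: "order K * Q = order G"
  using lagrange[OF subP] card_P by (simp add: order_def carrier_K)

lemma order_K': "order K = order G div Q"
  using order_K Q_pos by (metis nonzero_mult_div_cancel_right not_less0 neq0_conv)

lemma coset_in_K: "g \<in> carrier G \<Longrightarrow> P #> g \<in> carrier K"
  unfolding carrier_K using P_sub by (rule rcosetsI)

lemma K_pow: "g \<in> carrier G \<Longrightarrow> (P #> g) [^]\<^bsub>K\<^esub> (n::nat) = P #> (g [^] n)"
  using normal.FactGroup_pow[OF normP] by simp

lemma coset_P: "g \<in> carrier G \<Longrightarrow> (P #> g = P) \<longleftrightarrow> g \<in> P"
  using coset_join1[of P g] coset_join2[of g P] subP by auto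

lemma ordK_dvd:
  assumes g: "g \<in> carrier G"
  shows "group.ord K (P #> g) dvd n \<longleftrightarrow> g [^] n \<in> P"
proof -
  have "group.ord K (P #> g) dvd n \<longleftrightarrow> (P #> g) [^]\<^bsub>K\<^esub> n = \<one>\<^bsub>K\<^esub>"
    using group.pow_eq_id[OF grpK coset_in_K[OF g]] by simp
  also have "\<dots> \<longleftrightarrow> P #> (g [^] n) = P" using K_pow[OF g] by simp
  also have "\<dots> \<longleftrightarrow> g [^] n \<in> P" using coset_P g by simp
  finally show ?thesis .
qed

lemma ordK_pos: "g \<in> carrier G \<Longrightarrow> group.ord K (P #> g) \<ge> 1"
  using group.ord_ge_1[OF grpK finK coset_in_K] by simp

lemma ord_split:
  assumes g: "g \<in> carrier G"
  shows "ord g = group.ord K (P #> g) * ord (g [^] group.ord K (P #> g))"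
proof -
  let ?t = "group.ord K (P #> g)"
  have "g [^] ord g \<in> P" using g subgroup.one_closed[OF subP] by simp
  then have td: "?t dvd ord g" using ordK_dvd[OF g] by simp
  have t0: "?t \<noteq> 0" using ordK_pos[OF g] by simp
  have "ord (g [^] ?t) = ord g div ?t" by (rule ord_pow[OF g td t0])
  then show ?thesis using td by simp
qed

lemma rep:
  assumes Cs: "Cs \<in> carrier K"
  shows "\<exists>r\<in>carrier G. Cs = P #> r \<and> ord r = group.ord K Cs"
proof -
  obtain g where g: "g \<in> carrier G" "Cs = P #> g" using Cs unfolding carrier_K RCOSETS_def by blast
  define t where "t = group.ord K Cs"
  define s where "s = ord (g [^] t)"
  have t1: "t \<ge> 1" unfolding t_def g(2) by (rule ordK_pos[OF g(1)])
  have og: "ord g = t * s" unfolding s_def t_def g(2) by (rule ord_split[OF g(1)])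
  have "g [^] t \<in> P" using ordK_dvd[OF g(1), of t] by (simp add: t_def g(2))
  then have sQ: "s dvd Q" unfolding s_def by (rule ord_P_dvd)
  have tK: "t dvd order K" unfolding t_def using group.ord_dvd_group_order[OF grpK Cs] .
  have "coprime t s"
  proof -
    have "coprime (order G div Q) Q" using copQ by (simp add: coprime_commute)
    then have "coprime (order K) Q" using order_K' by simp
    then show ?thesis using tK sQ coprime_imp_coprime by (meson coprime_divisors)
  qed
  then have cst: "coprime s t" by (simp add: coprime_commute)
  obtain s' where s': "[s * s' = Suc 0] (mod t)" using cong_solve_coprime_nat[OF cst] by blast
  have "s \<noteq> 0" using sQ Q_pos by auto
  then have s1: "s \<ge> 1" by simp
  have ogs: "ord (g [^] s) = t"
    using ord_pow[OF g(1), of s] og s1 by simp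
  have cs't: "coprime s' t"
    using coprime_iff_invertible_nat[of s' t] s' by (auto simp: mult.commute)
  define r where "r = (g [^] s) [^] s'"
  have rc: "r \<in> carrier G" unfolding r_def using g by simp
  have ordr: "ord r = t"
    unfolding r_def using pow_ord_eq_ord_iff[OF fin, of "g [^] s" s'] g(1) cs't ogs by simp
  have "P #> r = Cs [^]\<^bsub>K\<^esub> (s * s')"
    unfolding r_def g(2) using g(1) by (simp add: K_pow nat_pow_pow)
  also have "\<dots> = Cs [^]\<^bsub>K\<^esub> ((s * s') mod t)"
    using group.pow_mod_ord[OF grpK Cs] by (simp add: t_def)
  also have "(s * s') mod t = (1::nat) mod t" using s' by (simp add: cong_def)
  also have "Cs [^]\<^bsub>K\<^esub> ((1::nat) mod t) = Cs [^]\<^bsub>K\<^esub> (1::nat)"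
    unfolding t_def by (rule group.pow_mod_ord[OF grpK Cs, symmetric])
  also have "\<dots> = Cs" by (rule monoid.nat_pow_eone[OF group.is_monoid[OF grpK] Cs])
  finally show ?thesis using rc ordr by (auto simp: t_def)
qed

lemma psi_split: "psi G = (\<Sum>Cs\<in>carrier K. \<Sum>g\<in>Cs. ord g)"
proof -
  have "psi G = (\<Sum>g\<in>\<Union>(rcosets P). ord g)"
    unfolding psi_def using rcosets_part_G[OF subP] by simp
  also have "\<dots> = (\<Sum>Cs\<in>rcosets P. \<Sum>g\<in>Cs. ord g)"
  proof -
    have f: "\<forall>Cs\<in>rcosets P. finite Cs"
      using rcosets_part_G[OF subP] fin by (metis Union_upper finite_subset)
    have d: "\<forall>A\<in>rcosets P. \<forall>B\<in>rcosets P. A \<noteq> B \<longrightarrow> A \<inter> B = {}"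
      using rcos_disjoint[OF subP] by (auto simp: pairwise_def disjnt_def)
    show ?thesis using sum.Union_disjoint[OF f d] by (simp add: o_def)
  qed
  finally show ?thesis by (simp add: carrier_K)
qed

lemma coset_reindex:
  assumes r: "r \<in> carrier G"
  shows "(\<Sum>g\<in>P #> r. ord g) = (\<Sum>c\<in>P. ord (c \<otimes> r))"
proof -
  have im: "P #> r = (\<lambda>c. c \<otimes> r) ` P" unfolding r_coset_def by auto
  have inj: "inj_on (\<lambda>c. c \<otimes> r) P"
  proof (rule inj_onI)
    fix x y assume xy: "x \<in> P" "y \<in> P" "x \<otimes> r = y \<otimes> r"
    then have "x \<in> carrier G" "y \<in> carrier G" using P_sub by auto
    then show "x = y" using xy(3) r by simp
  qed
  show ?thesis unfolding im by (rule sum.reindex[OF inj, unfolded o_def])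
qed

lemma cyc_elem: "w \<in> cyc c \<Longrightarrow> \<exists>j::nat. w = c [^] j"
  unfolding cyc_def by auto

lemma ord_le_cyc:
  assumes c: "c \<in> carrier G" and w: "w \<in> cyc c"
  shows "ord w \<le> ord c"
proof -
  obtain j :: nat where j: "w = c [^] j" using cyc_elem[OF w] by blast
  have "ord w = (if j = 0 then 1 else ord c div gcd (ord c) j)" unfolding j by (rule ord_pow_gen[OF c])
  then show ?thesis using ord_ge_1[OF fin c] by (auto intro: div_le_dividend)
qed

lemma cyc_sub_P: "c \<in> P \<Longrightarrow> cyc c \<subseteq> P"
  unfolding cyc_def using subgroup_pow_closed[OF subP] by auto

lemma elem_facts:
  assumes r: "r \<in> carrier G" and ordr: "ord r = group.ord K (P #> r)" and c: "c \<in> P"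
  shows "ord (c \<otimes> r) = group.ord K (P #> r) * ord ((c \<otimes> r) [^] group.ord K (P #> r))"
    and "(c \<otimes> r) [^] group.ord K (P #> r) \<in> cyc c"
proof -
  let ?t = "group.ord K (P #> r)"
  have cc: "c \<in> carrier G" using c P_sub by auto
  have g: "c \<otimes> r \<in> carrier G" using cc r by simp
  have "c \<otimes> r \<in> P #> r" by (rule rcosI[OF c P_sub r])
  then have eq: "P #> r = P #> (c \<otimes> r)" by (rule repr_independence[OF _ r subP])
  show "ord (c \<otimes> r) = ?t * ord ((c \<otimes> r) [^] ?t)"
    unfolding eq by (rule ord_split[OF g])
  obtain w where w: "w \<in> cyc c" "(c \<otimes> r) [^] ?t = w \<otimes> r [^] ?t"
    using pow_prod_in_cyc[OF c r] by blast
  have "r [^] ?t = \<one>" using r ordr by (simp flip: ordr)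
  then have "(c \<otimes> r) [^] ?t = w" using w cyc_subset[OF cc] by auto
  then show "(c \<otimes> r) [^] ?t \<in> cyc c" using w by simp
qed

lemma coset_bound1:
  assumes r: "r \<in> carrier G" and ordr: "ord r = group.ord K (P #> r)"
  shows "(\<Sum>g\<in>P #> r. ord g) \<le> group.ord K (P #> r) * F Q"
proof -
  let ?t = "group.ord K (P #> r)"
  have "(\<Sum>g\<in>P #> r. ord g) = (\<Sum>c\<in>P. ord (c \<otimes> r))" by (rule coset_reindex[OF r])
  also have "\<dots> \<le> (\<Sum>c\<in>P. ?t * ord c)"
  proof (rule sum_mono)
    fix c assume c: "c \<in> P"
    have cc: "c \<in> carrier G" using c P_sub by auto
    have "ord ((c \<otimes> r) [^] ?t) \<le> ord c" by (rule ord_le_cyc[OF cc elem_facts(2)[OF r ordr c]])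
    then show "ord (c \<otimes> r) \<le> ?t * ord c" unfolding elem_facts(1)[OF r ordr c] by simp
  qed
  also have "\<dots> = ?t * (\<Sum>c\<in>P. ord c)" by (simp add: sum_distrib_left)
  also have "(\<Sum>c\<in>P. ord c) = F Q" using cyc_sum[OF fin zc] by (simp add: Pdef ordz)
  finally show ?thesis .
qed

lemma coset_bound2:
  assumes r: "r \<in> carrier G" and ordr: "ord r = group.ord K (P #> r)"
    and nc: "c0 \<in> P" "r \<otimes> c0 \<noteq> c0 \<otimes> r"
  shows "(\<Sum>g\<in>P #> r. ord g) \<le> group.ord K (P #> r) * (Q * q^(a-1))"
proof -
  let ?t = "group.ord K (P #> r)"
  have c0c: "c0 \<in> carrier G" using nc P_sub by auto
  have each: "ord (c \<otimes> r) \<le> ?t * q^(a-1)" if c: "c \<in> P" for c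
  proof -
    have cc: "c \<in> carrier G" using c P_sub by auto
    define g where "g = c \<otimes> r"
    have gc: "g \<in> carrier G" using cc r by (simp add: g_def)
    define w where "w = g [^] ?t"
    have wc: "w \<in> carrier G" using gc by (simp add: w_def)
    have wP: "w \<in> P" using elem_facts(2)[OF r ordr c] cyc_sub_P[OF c] by (auto simp: w_def g_def)
    have wQ: "ord w dvd Q" by (rule ord_P_dvd[OF wP])
    have "ord w \<noteq> Q"
    proof
      assume oQ: "ord w = Q"
      have "cyc w \<subseteq> P" by (rule cyc_sub_P[OF wP])
      moreover have "card (cyc w) = card P" using card_cyc[OF fin wc] oQ card_P by simp
      ultimately have "cyc w = P" using fin_P by (simp add: card_subset_eq)
      then have "c0 \<in> cyc w" using nc(1) by simp
      then obtain j :: nat where j: "c0 = w [^] j" using cyc_elem by blast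
      have gw: "g \<otimes> w = w \<otimes> g"
        unfolding w_def using gc nat_pow_comm[OF gc, of 1 ?t] by simp
      have gc0: "g \<otimes> c0 = c0 \<otimes> g"
        unfolding j using group_commutes_pow[OF gw[symmetric] wc gc, of j] by simp
      have cc0: "c \<otimes> c0 = c0 \<otimes> c" by (rule P_comm[OF c nc(1)])
      have "c \<otimes> (r \<otimes> c0) = c \<otimes> (c0 \<otimes> r)"
      proof -
        have "c \<otimes> (r \<otimes> c0) = g \<otimes> c0" using cc r c0c by (simp add: g_def m_assoc)
        also have "\<dots> = c0 \<otimes> g" by (rule gc0)
        also have "\<dots> = (c0 \<otimes> c) \<otimes> r" using cc r c0c by (simp add: g_def m_assoc)
        also have "\<dots> = (c \<otimes> c0) \<otimes> r" by (simp add: cc0)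
        also have "\<dots> = c \<otimes> (c0 \<otimes> r)" using cc r c0c by (simp add: m_assoc)
        finally show ?thesis .
      qed
      then have "r \<otimes> c0 = c0 \<otimes> r" using cc r c0c by simp
      then show False using nc(2) by simp
    qed
    obtain i where i: "i \<le> a" "ord w = q^i"
      using wQ divides_primepow_nat[OF qprime] Qdef by auto
    have "i \<noteq> a" using i \<open>ord w \<noteq> Q\<close> Qdef by auto
    then have "i \<le> a - 1" using i by simp
    then have "q^i \<le> q^(a-1)" using qprime prime_ge_1_nat by (simp add: power_increasing)
    then have "ord w \<le> q^(a-1)" using i by simp
    then show ?thesis using elem_facts(1)[OF r ordr c] by (simp add: w_def g_def)
  qed
  have "(\<Sum>g\<in>P #> r. ord g) = (\<Sum>c\<in>P. ord (c \<otimes> r))" by (rule coset_reindex[OF r])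
  also have "\<dots> \<le> (\<Sum>c\<in>P. ?t * q^(a-1))" by (rule sum_mono) (rule each)
  also have "\<dots> = ?t * (Q * q^(a-1))" using card_P by simp
  finally show ?thesis .
qed

end

context group begin
lemma cyclic_has_gen:
  assumes fin: "finite (carrier G)" and cyc: "cyclic_group G"
  shows "\<exists>x\<in>carrier G. ord x = order G"
proof -
  obtain x where x: "x \<in> carrier G" "subgroup_generated G {x} = G" using cyc unfolding cyclic_group_def by blast
  have "ord x = order (subgroup_generated G {x})" by (rule cyclic_order_is_ord[OF x(1)])
  then show ?thesis using x by auto
qed
end

context group begin
lemma cyc_sum':
  assumes fin: "finite (carrier G)" and x: "x \<in> carrier G"
  shows "(\<Sum>j\<in>{..<ord x}. ord (x [^] j)) = F (ord x)"
proof -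
  have "(\<Sum>y\<in>cyc x. ord y) = (\<Sum>j\<in>{..<ord x}. ord (x [^] j))"
    unfolding cyc_def by (rule sum.reindex_cong[OF cyc_inj[OF fin x]]) auto
  then show ?thesis using cyc_sum[OF fin x] by simp
qed
end

context psetup begin

lemma psi_K_bound: "psi G \<le> F Q * psi K"
proof -
  have "psi G = (\<Sum>Cs\<in>carrier K. \<Sum>g\<in>Cs. ord g)" by (rule psi_split)
  also have "\<dots> \<le> (\<Sum>Cs\<in>carrier K. group.ord K Cs * F Q)"
  proof (rule sum_mono)
    fix Cs assume Cs: "Cs \<in> carrier K"
    obtain r where r: "r \<in> carrier G" "Cs = P #> r" "ord r = group.ord K Cs" using rep[OF Cs] by blast
    show "(\<Sum>g\<in>Cs. ord g) \<le> group.ord K Cs * F Q"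
      using coset_bound1[OF r(1)] r by simp
  qed
  also have "\<dots> = F Q * psi K" by (simp add: psi_def sum_distrib_left mult.commute)
  finally show ?thesis .
qed

definition centr :: "'a \<Rightarrow> bool" where
  "centr g \<longleftrightarrow> (\<forall>c\<in>P. g \<otimes> c = c \<otimes> g)"

lemma centr_mult: "g \<in> carrier G \<Longrightarrow> h \<in> carrier G \<Longrightarrow> centr g \<Longrightarrow> centr h \<Longrightarrow> centr (g \<otimes> h)"
  unfolding centr_def
proof (intro ballI)
  fix c assume g: "g \<in> carrier G" and h: "h \<in> carrier G" and cg: "\<forall>c\<in>P. g \<otimes> c = c \<otimes> g"
    and ch: "\<forall>c\<in>P. h \<otimes> c = c \<otimes> h" and c: "c \<in> P"
  have cc: "c \<in> carrier G" using c P_sub by auto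
  have "g \<otimes> h \<otimes> c = g \<otimes> (c \<otimes> h)" using g h cc ch c by (simp add: m_assoc)
  also have "\<dots> = c \<otimes> (g \<otimes> h)" using g h cc cg c by (simp add: m_assoc[symmetric])
  finally show "g \<otimes> h \<otimes> c = c \<otimes> (g \<otimes> h)" .
qed

lemma centr_inv: "g \<in> carrier G \<Longrightarrow> centr g \<Longrightarrow> centr (inv g)"
  unfolding centr_def
proof (intro ballI)
  fix c assume g: "g \<in> carrier G" and cg: "\<forall>c\<in>P. g \<otimes> c = c \<otimes> g" and c: "c \<in> P"
  have cc: "c \<in> carrier G" using c P_sub by auto
  have e: "g \<otimes> c = c \<otimes> g" using cg c by simp
  have "inv g \<otimes> c = inv g \<otimes> c \<otimes> (g \<otimes> inv g)" using g cc by simp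
  also have "\<dots> = inv g \<otimes> (g \<otimes> c) \<otimes> inv g" using g cc e by (simp add: m_assoc)
  also have "\<dots> = c \<otimes> inv g" using g cc by (simp add: m_assoc[symmetric])
  finally show "inv g \<otimes> c = c \<otimes> inv g" .
qed

lemma centr_one: "centr \<one>" unfolding centr_def using P_sub by auto

lemma centr_pow: "g \<in> carrier G \<Longrightarrow> centr g \<Longrightarrow> centr (g [^] (n::nat))"
  by (induction n) (auto simp: centr_one centr_mult)

lemma centr_P: "c \<in> P \<Longrightarrow> centr c" unfolding centr_def using P_comm by auto

lemma centr_coset:
  assumes r: "r \<in> carrier G" and cr: "centr r" and g: "g \<in> P #> r"
  shows "centr g"
proof -
  obtain c where c: "c \<in> P" "g = c \<otimes> r" using g unfolding r_coset_def by blast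
  show ?thesis unfolding c(2) using centr_mult[OF _ r centr_P[OF c(1)] cr] c(1) P_sub by auto
qed

lemma coset_bound:
  assumes Cs: "Cs \<in> carrier K"
  shows "(\<Sum>g\<in>Cs. ord g) \<le> group.ord K Cs * (if (\<forall>g\<in>Cs. centr g) then F Q else Q * q^(a-1))"
proof -
  obtain r where r: "r \<in> carrier G" "Cs = P #> r" "ord r = group.ord K Cs" using rep[OF Cs] by blast
  show ?thesis
  proof (cases "\<forall>g\<in>Cs. centr g")
    case True
    have "(\<Sum>g\<in>Cs. ord g) \<le> group.ord K Cs * F Q" using coset_bound1[OF r(1)] r by simp
    then show ?thesis unfolding if_P[OF True] .
  next
    case False
    then have "\<not> centr r" using centr_coset r by blast
    then obtain c0 where c0: "c0 \<in> P" "r \<otimes> c0 \<noteq> c0 \<otimes> r" unfolding centr_def by blast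
    have "(\<Sum>g\<in>Cs. ord g) \<le> group.ord K Cs * (Q * q^(a-1))"
      using coset_bound2[OF r(1) _ c0] r by simp
    then show ?thesis unfolding if_not_P[OF False] .
  qed
qed

lemma B_bound:
  assumes q3: "q \<ge> 3"
  shows "11 * (Q * q^(a-1)) \<le> 5 * F Q"
proof -
  define V where "V = q^(a-1)"
  have QV: "Q = q * V" unfolding V_def Qdef using a1 by (simp add: power_eq_if)
  have e: "(q+1) * F Q = q^(2*a+1) + 1" unfolding Qdef by (rule F_pp[OF qprime])
  have "q^(2*a+1) = q*q*q * (V*V)"
  proof -
    have "2*a+1 = 3 + (a-1) + (a-1)" using a1 by simp
    then have "q^(2*a+1) = q^3 * q^(a-1) * q^(a-1)" by (simp only: power_add)
    then show ?thesis unfolding V_def by (simp add: power3_eq_cube)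
  qed
  then have e2: "(q+1) * F Q = q*q*q*(V*V) + 1" using e by simp
  have "11 * (q+1) \<le> 5 * (q*q)"
  proof -
    have "q*q \<ge> 3*q" using q3 by simp
    then have "5*(q*q) \<ge> 15*q" by simp
    moreover have "11*(q+1) = 11*q + 11" by simp
    ultimately show ?thesis using q3 by linarith
  qed
  then have "11 * (q+1) * (q*(V*V)) \<le> 5 * (q*q) * (q*(V*V))" by (rule mult_right_mono) simp
  then have "(q+1) * (11 * (Q * q^(a-1))) \<le> (q+1) * (5 * F Q)"
    using e2 QV unfolding V_def[symmetric] by (simp add: algebra_simps)
  then show ?thesis by (rule mult_left_le_imp_le) simp
qed

lemma cen_coset:
  assumes g: "g \<in> carrier G"
  shows "(\<forall>h\<in>P #> g. centr h) \<longleftrightarrow> centr g"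
  using centr_coset[OF g] rcos_self[OF g subP] by blast

lemma cyclic_K_bound:
  assumes cK: "cyclic_group K" and nG: "\<not> cyclic_group G" and q3: "q \<ge> 3"
  shows "11 * psi G \<le> 7 * (F Q * F (order K))"
proof -
  define k where "k = order K"
  obtain Y where Y: "Y \<in> carrier K" "group.ord K Y = k"
    using group.cyclic_has_gen[OF grpK finK cK] by (auto simp: k_def)
  obtain y where y: "y \<in> carrier G" "Y = P #> y" "ord y = k" using rep[OF Y(1)] Y(2) by auto
  have k0: "k > 0" using group.ord_ge_1[OF grpK finK Y(1)] Y(2) by simp
  have psiK: "psi K = F k" using group.psi_if_ord[OF grpK finK Y(1)] Y(2) by (simp add: k_def)
  define cen where "cen Cs \<longleftrightarrow> (\<forall>h\<in>Cs. centr h)" for Cs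
  have Ypow: "Y [^]\<^bsub>K\<^esub> (i::nat) = P #> y [^] i" for i using K_pow[OF y(1)] y(2) by simp
  have cenY: "cen (Y [^]\<^bsub>K\<^esub> (i::nat)) \<longleftrightarrow> centr (y [^] i)" for i
    unfolding Ypow cen_def using cen_coset y(1) by simp
  have ny: "\<not> centr y"
  proof
    assume cy: "centr y"
    have zP: "z \<in> P" using pow_in_cyc[OF fin zc, of 1] zc by (simp add: Pdef)
    have comm: "y \<otimes> z = z \<otimes> y" using cy zP unfolding centr_def by blast
    have "coprime (order G div Q) Q" using copQ by (simp add: coprime_commute)
    then have "coprime (ord y) (ord z)" using y(3) ordz order_K' by (simp add: k_def)
    then have "ord (y \<otimes> z) = ord y * ord z" by (rule ord_comm_coprime[OF fin comm y(1) zc])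
    also have "\<dots> = order G" using y(3) ordz order_K by (simp add: k_def)
    finally have oyz: "ord (y \<otimes> z) = order G" .
    have yz: "y \<otimes> z \<in> carrier G" using y(1) zc by simp
    have "cyclic_group G" by (rule cyclic_if_ord[OF fin yz oyz])
    then show False using nG by simp
  qed
  define d where "d = (LEAST i::nat. 0 < i \<and> centr (y [^] i))"
  have yk: "y [^] k = \<one>" using y by (simp flip: y(3))
  have ex: "0 < k \<and> centr (y [^] (k::nat))" using k0 yk centr_one by simp
  have dprop: "0 < d \<and> centr (y [^] d)" unfolding d_def
    by (rule LeastI[of "\<lambda>i::nat. 0 < i \<and> centr (y [^] i)" k, OF ex])
  have ydc: "y [^] d \<in> carrier G" using y(1) by simp
  have dmin: "d \<le> j" if "0 < j" "centr (y [^] j)" for j :: nat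
    unfolding d_def by (rule Least_le) (use that in simp)
  have ddvd: "d dvd i" if ci: "centr (y [^] i)" for i
  proof (rule ccontr)
    assume nd: "\<not> d dvd i"
    then have im: "0 < i mod d" using mod_eq_0_iff_dvd by auto
    have lt: "i mod d < d" using dprop by simp
    have "y [^] i = (y [^] d) [^] (i div d) \<otimes> y [^] (i mod d)"
      using y(1) by (simp add: nat_pow_pow nat_pow_mult)
    then have "y [^] (i mod d) = inv ((y [^] d) [^] (i div d)) \<otimes> y [^] i"
      using y(1) by (simp add: inv_cancel_left)
    moreover have "centr (inv ((y [^] d) [^] (i div d)) \<otimes> y [^] i)"
      by (rule centr_mult) (use y(1) ydc dprop ci centr_inv centr_pow in auto)
    ultimately have "centr (y [^] (i mod d))" by simp
    then have "d \<le> i mod d" using dmin[OF im] by simp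
    then show False using lt by simp
  qed
  have dk: "d dvd k" using ddvd ex by simp
  have d2: "d \<ge> 2"
  proof -
    have "d \<noteq> 1" using dprop ny y(1) by auto
    then show ?thesis using dprop by simp
  qed
  define A where "A = (\<Sum>Cs\<in>carrier K \<inter> {Cs. cen Cs}. group.ord K Cs)"
  define A' where "A' = (\<Sum>Cs\<in>carrier K \<inter> - {Cs. cen Cs}. group.ord K Cs)"
  have AA': "A + A' = F k"
    unfolding A_def A'_def psiK[symmetric] psi_def
    using sum.Int_Diff[OF finK, of "group.ord K" "{Cs. cen Cs}"] by (simp add: Diff_eq)
  have carrK: "carrier K = (\<lambda>i. Y [^]\<^bsub>K\<^esub> i) ` {..<k}"
    using group.cyc_full[OF grpK finK Y(1)] Y(2) unfolding group.cyc_def[OF grpK] k_def by simp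
  have Yd: "Y [^]\<^bsub>K\<^esub> d \<in> carrier K" using Y(1) group.is_monoid[OF grpK] by (simp add: monoid.nat_pow_closed)
  have ordYd: "group.ord K (Y [^]\<^bsub>K\<^esub> d) = k div d"
    using group.ord_pow[OF grpK Y(1)] Y(2) dk dprop by simp
  have sub: "carrier K \<inter> {Cs. cen Cs} \<subseteq> (\<lambda>j. (Y [^]\<^bsub>K\<^esub> d) [^]\<^bsub>K\<^esub> j) ` {..<k div d}"
  proof
    fix Cs assume "Cs \<in> carrier K \<inter> {Cs. cen Cs}"
    then obtain i where i: "i < k" "Cs = Y [^]\<^bsub>K\<^esub> i" "cen Cs" using carrK by auto
    then have "centr (y [^] i)" using cenY by simp
    then obtain j where j: "i = d * j" using ddvd by blast
    have "j < k div d" using i(1) j dprop dk by (metis dvd_mult_div_cancel mult_less_cancel1)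
    moreover have "Cs = (Y [^]\<^bsub>K\<^esub> d) [^]\<^bsub>K\<^esub> j"
      using i(2) j Y(1) group.is_monoid[OF grpK] by (simp add: monoid.nat_pow_pow)
    ultimately show "Cs \<in> (\<lambda>j. (Y [^]\<^bsub>K\<^esub> d) [^]\<^bsub>K\<^esub> j) ` {..<k div d}" by blast
  qed
  have "A \<le> (\<Sum>Cs\<in>(\<lambda>j. (Y [^]\<^bsub>K\<^esub> d) [^]\<^bsub>K\<^esub> j) ` {..<k div d}. group.ord K Cs)"
    unfolding A_def by (rule sum_mono2[OF _ sub]) auto
  also have "\<dots> \<le> (\<Sum>j\<in>{..<k div d}. group.ord K ((Y [^]\<^bsub>K\<^esub> d) [^]\<^bsub>K\<^esub> j))"
    using sum_image_le[of "{..<k div d}" "group.ord K" "\<lambda>j. (Y [^]\<^bsub>K\<^esub> d) [^]\<^bsub>K\<^esub> j"]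
    by (simp add: o_def)
  also have "\<dots> = F (k div d)"
    using group.cyc_sum'[OF grpK finK Yd] ordYd by simp
  finally have AF: "A \<le> F (k div d)" .
  have "3 * F (k div d) \<le> F k" by (rule F_proper[OF k0 dk d2])
  then have A3: "3 * A \<le> A + A'" using AF AA' by linarith
  have "psi G \<le> (\<Sum>Cs\<in>carrier K. group.ord K Cs * (if cen Cs then F Q else Q * q^(a-1)))"
    unfolding psi_split cen_def by (rule sum_mono) (rule coset_bound)
  also have "\<dots> = (\<Sum>Cs\<in>carrier K. if cen Cs then F Q * group.ord K Cs else (Q * q^(a-1)) * group.ord K Cs)"
    by (rule sum.cong) auto
  also have "\<dots> = F Q * A + (Q * q^(a-1)) * A'"
    unfolding A_def A'_def sum.If_cases[OF finK] sum_distrib_left by simp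
  finally have pG: "psi G \<le> F Q * A + (Q * q^(a-1)) * A'" .
  have Bb: "11 * (Q * q^(a-1)) \<le> 5 * F Q" by (rule B_bound[OF q3])
  have "11 * psi G \<le> 11 * (F Q * A) + 11 * (Q * q^(a-1)) * A'" using pG by simp
  also have "\<dots> \<le> 11 * (F Q * A) + 5 * F Q * A'" using Bb by (simp add: mult_right_mono)
  also have "\<dots> \<le> 7 * (F Q * (A + A'))"
  proof -
    have "2 * A \<le> A'" using A3 by simp
    then have "F Q * (2 * A) \<le> F Q * A'" by simp
    then show ?thesis by (simp add: algebra_simps)
  qed
  also have "\<dots> = 7 * (F Q * F (order K))" using AA' by (simp add: k_def)
  finally show ?thesis .
qed

end

lemma largest_prime:
  fixes n :: nat
  assumes "n \<ge> 2"
  shows "\<exists>q. Factorial_Ring.prime q \<and> q dvd n \<and> (\<forall>p. Factorial_Ring.prime p \<longrightarrow> p dvd n \<longrightarrow> p \<le> q)"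
proof -
  define S where "S = {p. Factorial_Ring.prime p \<and> p dvd n}"
  have finS: "finite S" unfolding S_def
    by (rule finite_subset[of _ "{..n}"]) (use assms in \<open>auto dest: dvd_imp_le\<close>)
  have "n \<noteq> 1" using assms by simp
  then obtain p0 where "Factorial_Ring.prime p0" "p0 dvd n" using prime_factor_nat by blast
  then have neS: "S \<noteq> {}" by (auto simp: S_def)
  have "Max S \<in> S" using finS neS by (rule Max_in)
  moreover have "\<forall>p. Factorial_Ring.prime p \<longrightarrow> p dvd n \<longrightarrow> p \<le> Max S"
    using finS by (auto simp: S_def)
  ultimately show ?thesis by (auto simp: S_def)
qed

lemma two_power_case:
  fixes b e :: nat
  assumes b: "b \<ge> 1" and be: "b < e"
  shows "11 * (F (2^b) + (2^e - 2^b) * 2^b) \<le> 7 * F (2^e)"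
proof -
  have p2: "Factorial_Ring.prime (2::nat)" by simp
  define u :: nat where "u = 2^b"
  define n :: nat where "n = 2^e"
  have u2: "u \<ge> 2" unfolding u_def using b by (metis One_nat_def power_increasing power_one_right one_le_numeral le_trans order_refl Suc_1 self_le_power numeral_le_iff)
  have nu: "2 * u \<le> n" unfolding u_def n_def using be by (metis power_Suc Suc_leI power_increasing one_le_numeral)
  have Fu: "3 * F u = 2 * u * u + 1"
    using F_pp[OF p2, of b] unfolding u_def by (simp add: power_add power_mult power2_eq_square mult.commute mult.left_commute)
  have Fn: "3 * F n = 2 * n * n + 1"
    using F_pp[OF p2, of e] unfolding n_def by (simp add: power_add power_mult power2_eq_square mult.commute mult.left_commute)
  have un: "u \<le> n" using nu by simp
  have key: "11 * (2 * u * u + 1) + 33 * ((n - u) * u) \<le> 7 * (2 * n * n + 1)"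
  proof -
    have i1: "int ((n - u) * u) = (int n - int u) * int u" using un by (simp add: of_nat_diff)
    have "(int n - 2 * int u) * (14 * int n - 5 * int u) \<ge> 0"
      using nu by (intro mult_nonneg_nonneg) auto
    moreover have "int u * int u \<ge> 4" using u2 by (metis mult_mono' of_nat_0_le_iff of_nat_le_iff of_nat_numeral mult_2 numeral_Bit0 numeral_times_numeral)
    ultimately have "11 * (2 * int u * int u + 1) + 33 * ((int n - int u) * int u) \<le> 7 * (2 * int n * int n + 1)"
      by (simp add: algebra_simps)
    moreover have "int (11 * (2 * u * u + 1) + 33 * ((n - u) * u)) = 11 * (2 * int u * int u + 1) + 33 * ((int n - int u) * int u)"
      using i1 by simp
    moreover have "int (7 * (2 * n * n + 1)) = 7 * (2 * int n * int n + 1)" by simp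
    ultimately have "int (11 * (2 * u * u + 1) + 33 * ((n - u) * u)) \<le> int (7 * (2 * n * n + 1))" by linarith
    then show ?thesis by (simp only: of_nat_le_iff)
  qed
  have "3 * (11 * (F u + (n - u) * u)) \<le> 3 * (7 * F n)"
    using key Fu Fn by (simp add: algebra_simps)
  then show ?thesis unfolding u_def n_def by simp
qed

context group begin

lemma P_char:
  assumes fin: "finite (carrier G)" and x: "x \<in> carrier G"
    and nM: "order G = ord x * m" and m0: "m > 0"
    and q: "Factorial_Ring.prime q" and mq: "m < q"
    and QM: "ord x = Q * L" and Qq: "Q = q^a"
  shows "cyc (x [^] L) = {g \<in> carrier G. g [^] Q = \<one>}"
proof -
  have L0: "L > 0" using QM ord_ge_1[OF fin x] by (cases L) auto
  have Q0: "Q > 0" using QM ord_ge_1[OF fin x] by (cases Q) auto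
  have zc: "x [^] L \<in> carrier G" using x by simp
  have oz: "ord (x [^] L) = Q" using ord_pow[OF x, of L] QM L0 by simp
  show ?thesis
  proof
    show "cyc (x [^] L) \<subseteq> {g \<in> carrier G. g [^] Q = \<one>}"
    proof
      fix g assume "g \<in> cyc (x [^] L)"
      then obtain j :: nat where j: "g = (x [^] L) [^] j" unfolding cyc_def by auto
      have "g [^] Q = ((x [^] L) [^] Q) [^] j" using j zc by (simp add: nat_pow_pow mult.commute)
      also have "\<dots> = \<one>" using oz zc by (simp flip: oz)
      finally show "g \<in> {g \<in> carrier G. g [^] Q = \<one>}" using j zc by simp
    qed
    show "{g \<in> carrier G. g [^] Q = \<one>} \<subseteq> cyc (x [^] L)"
    proof
      fix g assume "g \<in> {g \<in> carrier G. g [^] Q = \<one>}"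
      then have g: "g \<in> carrier G" "g [^] Q = \<one>" by auto
      have "ord g dvd q^a" using g pow_eq_id Qq by simp
      then obtain i where i: "ord g = q^i" using divides_primepow_nat[OF q] by auto
      have cardR: "card (rcosets (cyc x)) = m"
      proof -
        have "card (rcosets (cyc x)) * card (cyc x) = order G" by (rule lagrange[OF cyc_subgroup[OF fin x]])
        then have "card (rcosets (cyc x)) * ord x = ord x * m" using card_cyc[OF fin x] nM by simp
        then show ?thesis using ord_ge_1[OF fin x] by simp
      qed
      have "g \<in> cyc x"
      proof (rule small_index[OF fin cyc_subgroup[OF fin x] g(1) cardR])
        fix j assume j: "1 \<le> j" "j \<le> m"
        have "\<not> q dvd j" using j mq by (auto dest: dvd_imp_le)
        then have "coprime q j" using q by (simp add: prime_imp_coprime)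
        then show "coprime j (ord g)" unfolding i by (simp add: coprime_commute)
      qed
      then obtain i' where i': "i' < ord x" "g = x [^] i'" unfolding cyc_def by auto
      have "x [^] (i' * Q) = \<one>" using g(2) i' x by (simp add: nat_pow_pow)
      then have "Q * L dvd i' * Q" using pow_eq_id[OF x] QM by simp
      then have "L dvd i'" using Q0 by (simp add: mult.commute)
      then obtain j where j: "i' = L * j" by blast
      have "g = (x [^] L) [^] j" using i' j x by (simp add: nat_pow_pow)
      then show "g \<in> cyc (x [^] L)" using pow_in_cyc[OF fin zc] by simp
    qed
  qed
qed

lemma P_normal:
  fixes Q :: nat
  assumes fin: "finite (carrier G)" and z: "z \<in> carrier G"
    and ch: "cyc z = {g \<in> carrier G. g [^] Q = \<one>}"
  shows "cyc z \<lhd> G"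
proof -
  have "\<forall>h\<in>carrier G. \<forall>g\<in>cyc z. h \<otimes> g \<otimes> inv h \<in> cyc z"
  proof (intro ballI)
    fix h g assume h: "h \<in> carrier G" and g: "g \<in> cyc z"
    then have gc: "g \<in> carrier G" "g [^] Q = \<one>" using ch by auto
    have "(h \<otimes> g \<otimes> inv h) [^] Q = h \<otimes> g [^] Q \<otimes> inv h" by (rule conj_pow[OF h gc(1)])
    also have "\<dots> = \<one>" using gc h by simp
    finally show "h \<otimes> g \<otimes> inv h \<in> cyc z" using ch h gc by simp
  qed
  then show ?thesis using normal_inv_iff cyc_subgroup[OF fin z] by blast
qed

lemma step:
  assumes fin: "finite (carrier G)" and nc: "\<not> cyclic_group G"
    and IH: "\<And>m (H::nat monoid). m < order G \<Longrightarrow> group H \<Longrightarrow> finite (carrier H) \<Longrightarrow> order H = m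
                 \<Longrightarrow> \<not> cyclic_group H \<Longrightarrow> 11 * psi H \<le> 7 * F m"
  shows "11 * psi G \<le> 7 * F (order G)"
proof -
  define n where "n = order G"
  have n0: "n > 0" using fin by (simp add: n_def order_gt_0_iff_finite)
  have n1: "n \<noteq> 1"
  proof
    assume "n = 1"
    then have "ord \<one> = order G" by (simp add: n_def)
    then have "cyclic_group G" using cyclic_if_ord[OF fin one_closed] by simp
    then show False using nc by simp
  qed
  have n2: "n \<ge> 2" using n0 n1 by simp
  have neO: "ord ` carrier G \<noteq> {}" by auto
  have "Max (ord ` carrier G) \<in> ord ` carrier G" using fin neO by (simp add: Max_in)
  then obtain x where x: "x \<in> carrier G" "ord x = Max (ord ` carrier G)" by auto
  have xmax: "ord g \<le> ord x" if "g \<in> carrier G" for g using fin that x(2) by simp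
  define M where "M = ord x"
  have Mdvd: "M dvd n" unfolding M_def n_def by (rule ord_dvd_group_order[OF x(1)])
  have Mn: "M \<noteq> n"
  proof
    assume "M = n"
    then have "cyclic_group G" using cyclic_if_ord[OF fin x(1)] by (simp add: M_def n_def)
    then show False using nc by simp
  qed
  have M0: "M > 0" using ord_ge_1[OF fin x(1)] by (simp add: M_def)
  define m where "m = n div M"
  have nMm: "n = M * m" using Mdvd by (simp add: m_def)
  have m2: "m \<ge> 2"
  proof -
    have "m \<noteq> 0" using nMm n0 by auto
    moreover have "m \<noteq> 1" using nMm Mn by auto
    ultimately show ?thesis by simp
  qed
  have M2: "M \<ge> 2"
  proof -
    have "card (carrier G) \<ge> 2" using n2 by (simp add: n_def order_def)
    have "\<not> carrier G \<subseteq> {\<one>}"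
    proof
      assume "carrier G \<subseteq> {\<one>}"
      then have "card (carrier G) \<le> card {\<one>}" by (rule card_mono[rotated]) simp
      then show False using \<open>card (carrier G) \<ge> 2\<close> by simp
    qed
    then obtain g where g: "g \<in> carrier G" "g \<noteq> \<one>" by blast
    have "ord g \<noteq> 1" using ord_eq_1[OF g(1)] g(2) by simp
    moreover have "ord g \<ge> 1" by (rule ord_ge_1[OF fin g(1)])
    ultimately show ?thesis using xmax[OF g(1)] by (simp add: M_def)
  qed
  have crude: "psi G \<le> F M + (n - M) * M" using psi_crude[OF fin x(1) xmax] by (simp add: M_def n_def)
  have maxb: "psi G \<le> n * M" using psi_le_max[OF fin xmax] by (simp add: M_def n_def)
  obtain q where q: "Factorial_Ring.prime q" "q dvd n" "\<forall>p. Factorial_Ring.prime p \<longrightarrow> p dvd n \<longrightarrow> p \<le> q"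
    using largest_prime[OF n2] by blast
  have q2: "q \<ge> 2" using q(1) prime_ge_2_nat by blast
  show ?thesis
  proof (cases "q = 2")
    case True
    obtain e r where er: "n = 2^e * r" "\<not> 2 dvd r" using prime_power_split[of 2 n] n0 by auto
    have r1: "r = 1"
    proof (rule ccontr)
      assume "r \<noteq> 1"
      then obtain p where p: "Factorial_Ring.prime p" "p dvd r" using prime_factor_nat by blast
      then have "p dvd n" using er by simp
      then have "p \<le> 2" using q(3) p True by auto
      then have "p = 2" using p prime_ge_2_nat by (metis le_antisym)
      then show False using p er by simp
    qed
    then have ne: "n = 2^e" using er by simp
    have p2: "Factorial_Ring.prime (2::nat)" by simp
    obtain b where b: "b \<le> e" "M = 2^b" using divides_primepow_nat[OF p2] Mdvd ne by auto
    have "b \<noteq> e" using Mn b ne by auto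
    then have be: "b < e" using b by simp
    have b1: "b \<ge> 1" using M2 b by (cases b) auto
    show ?thesis using two_power_case[OF b1 be] crude b ne by (simp add: n_def[symmetric])
  next
    case False
    then have q3: "q \<ge> 3" using q2 by simp
    show ?thesis
    proof (cases "m < q")
      case True
      obtain a r where ar: "n = q^a * r" "\<not> q dvd r" using prime_power_split[OF q(1) n0] by blast
      have a1: "a \<ge> 1" using ar q(2) by (cases a) auto
      define Q where "Q = q^a"
      have r0: "r > 0" using ar n0 by (cases r) auto
      have nqm: "\<not> q dvd m" using True m2 by (auto dest: dvd_imp_le)
      have "coprime q m" using q(1) nqm by (simp add: prime_imp_coprime)
      then have copm: "coprime Q m" by (simp add: Q_def)
      have "Q dvd M * m" using ar nMm by (simp add: Q_def)
      then have QM: "Q dvd M" using copm by (simp add: coprime_dvd_mult_left_iff)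
      define L where "L = M div Q"
      have MQL: "ord x = Q * L" using QM by (simp add: L_def M_def)
      have ch: "cyc (x [^] L) = {g \<in> carrier G. g [^] Q = \<one>}"
        by (rule P_char[OF fin x(1) _ _ q(1) True MQL Q_def]) (use nMm m2 in \<open>auto simp: M_def n_def\<close>)
      have zc: "x [^] L \<in> carrier G" using x(1) by simp
      have L0: "L > 0" using MQL ord_ge_1[OF fin x(1)] by (cases L) auto
      have oz: "ord (x [^] L) = Q" using ord_pow[OF x(1), of L] MQL L0 by simp
      have norm: "cyc (x [^] L) \<lhd> G" by (rule P_normal[OF fin zc ch])
      have nQ: "order G div Q = r" using ar q2 by (simp add: Q_def n_def[symmetric])
      have copQ: "coprime Q r" using ar(2) q(1) by (simp add: Q_def prime_imp_coprime)
      have ax: "psetup G (cyc (x [^] L)) (x [^] L) q a Q"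
        by (intro psetup.intro is_group psetup_axioms.intro)
           (use fin zc oz Q_def q a1 norm copQ nQ ar in \<open>auto simp: n_def\<close>)
      interpret ps: psetup G "cyc (x [^] L)" "x [^] L" q a Q by (rule ax)
      have oK: "order (G Mod cyc (x [^] L)) = r" using ps.order_K' nQ by simp
      have Fn: "F n = F Q * F r" using F_mult[OF copQ] ar by (simp add: Q_def)
      show ?thesis
      proof (cases "cyclic_group (G Mod cyc (x [^] L))")
        case True
        then show ?thesis using ps.cyclic_K_bound[OF True nc q3] oK Fn by (simp add: n_def)
      next
        case False
        obtain H :: "nat monoid" where H: "group H" "finite (carrier H)"
          "order H = order (G Mod cyc (x [^] L))" "psi H = psi (G Mod cyc (x [^] L))"
          "cyclic_group H \<longleftrightarrow> cyclic_group (G Mod cyc (x [^] L))"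
          using transfer_nat[OF ps.grpK ps.finK] by blast
        have "q^1 \<le> q^a" by (rule power_increasing) (use a1 q2 in auto)
        then have "Q \<ge> 2" unfolding Q_def using q2 by simp
        then have rn: "r < order G" using ar r0 by (simp add: Q_def n_def[symmetric])
        have "11 * psi H \<le> 7 * F r" by (rule IH[OF rn H(1) H(2)]) (use H oK False in auto)
        then have "11 * psi (G Mod cyc (x [^] L)) \<le> 7 * F r" using H(4) by simp
        moreover have "psi G \<le> F Q * psi (G Mod cyc (x [^] L))" by (rule ps.psi_K_bound)
        ultimately have "11 * psi G \<le> F Q * (7 * F r)"
        proof -
          assume a1': "11 * psi (G Mod cyc (x [^] L)) \<le> 7 * F r"
            and a2': "psi G \<le> F Q * psi (G Mod cyc (x [^] L))"
          have "11 * psi G \<le> 11 * (F Q * psi (G Mod cyc (x [^] L)))" using a2' by simp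
          also have "\<dots> = F Q * (11 * psi (G Mod cyc (x [^] L)))" by simp
          also have "\<dots> \<le> F Q * (7 * F r)" using a1' by (rule mult_left_mono) simp
          finally show ?thesis .
        qed
        then show ?thesis using Fn by (simp add: n_def algebra_simps)
      qed
    next
      case False
      then have mq: "m \<ge> q" by simp
      have Fl: "2 * n^2 \<le> (q+1) * F n" by (rule F_lower) (use n0 q q2 in auto)
      show ?thesis
      proof (cases "q = 3 \<and> m = 3")
        case True
        have n3: "n = 3 * M" using nMm True by simp
        have p3: "Factorial_Ring.prime (3::nat)" by simp
        have F7: "7 * F M \<le> F n" using F_step[OF p3 M0] n3 by simp
        have Fl3: "2 * n^2 \<le> 4 * F n" using Fl True by simp
        have "63 * (11 * psi G) \<le> 63 * (11 * (F M + 2 * M * M))"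
          using crude n3 by simp
        also have "\<dots> = 99 * (7 * F M) + 77 * (2 * (3 * M)^2)" by (simp add: algebra_simps power2_eq_square)
        also have "\<dots> \<le> 99 * F n + 77 * (4 * F n)" using F7 Fl3 n3 by (intro add_mono) simp_all
        also have "\<dots> \<le> 63 * (7 * F n)" by simp
        finally show ?thesis by (simp add: n_def)
      next
        case False
        have c: "11 * (q+1) \<le> 14 * m"
        proof (cases "q = 3")
          case True
          then have "m \<ge> 4" using False mq by simp
          then show ?thesis using True by simp
        next
          case False
          then have "q \<ge> 4" using q3 by simp
          then show ?thesis using mq by simp
        qed
        have "2 * m * (11 * psi G) \<le> 22 * (n * (M * m))" using maxb by (simp add: algebra_simps)
        also have "\<dots> = 11 * (2 * n^2)" using nMm by (simp add: power2_eq_square algebra_simps)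
        also have "\<dots> \<le> 11 * ((q+1) * F n)" using Fl by simp
        also have "\<dots> \<le> 14 * m * F n"
        proof -
          have "11 * (q+1) * F n \<le> 14 * m * F n" by (rule mult_right_mono[OF c]) simp
          then show ?thesis by (simp only: mult.assoc)
        qed
        finally have "2 * m * (11 * psi G) \<le> 2 * m * (7 * F n)" by (simp add: algebra_simps)
        then show ?thesis using m2 by (simp add: n_def)
      qed
    qed
  qed
qed

end

lemma main_nat:
  "\<forall>H :: nat monoid. group H \<longrightarrow> finite (carrier H) \<longrightarrow> order H = n \<longrightarrow> \<not> cyclic_group H
      \<longrightarrow> 11 * psi H \<le> 7 * F n"
proof (induction n rule: less_induct)
  case (less n)
  show ?case
  proof (intro allI impI)
    fix H :: "nat monoid"
    assume H: "group H" "finite (carrier H)" "order H = n" "\<not> cyclic_group H"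
    have IH: "11 * psi H' \<le> 7 * F m"
      if "m < order H" "group H'" "finite (carrier H')" "order H' = m" "\<not> cyclic_group H'"
      for m and H' :: "nat monoid"
    proof -
      have "m < n" using that(1) H(3) by simp
      then show ?thesis using less.IH[of m, rule_format, OF _ that(2) that(3) that(4) that(5)] by simp
    qed
    have "11 * psi H \<le> 7 * F (order H)"
      by (rule group.step[OF H(1) H(2) H(4)], rule IH, assumption+)
    then show "11 * psi H \<le> 7 * F n" using H(3) by simp
  qed
qed

theorem theorem1:
  fixes G :: "('a, 'b) monoid_scheme"
  assumes "group G" and "finite (carrier G)" and "\<not> cyclic_group G"
  shows "real (psi G) \<le> 7 / 11 * real (psi (integer_mod_group (order G)))"
proof -
  obtain H :: "nat monoid" where H: "group H" "finite (carrier H)" "order H = order G"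
    "psi H = psi G" "cyclic_group H \<longleftrightarrow> cyclic_group G"
    using transfer_nat[OF assms(1,2)] by blast
  have nH: "\<not> cyclic_group H" using H(5) assms(3) by simp
  have "11 * psi H \<le> 7 * F (order G)"
    by (rule main_nat[of "order G", rule_format, OF H(1) H(2) H(3) nH])
  then have i: "11 * psi G \<le> 7 * F (order G)" using H(4) by simp
  have "order G > 0" using assms(2) monoid.order_gt_0_iff_finite[OF group.is_monoid[OF assms(1)]] by simp
  then have "order G \<ge> 1" by simp
  then have "psi (integer_mod_group (order G)) = F (order G)" by (rule psi_integer_mod_group)
  moreover have "11 * real (psi G) \<le> 7 * real (F (order G))"
  proof -
    have "real (11 * psi G) \<le> real (7 * F (order G))" using i by (rule of_nat_mono)
    then show ?thesis by simp
  qed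
  ultimately show ?thesis by simp
qed

end
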